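(* Let $K_{\Delta p},K_{\Delta v},\lambda_1,\lambda_2,\gamma_{\Delta p},\gamma_{\Delta v}>0$ and $a,b\ge0$. For each $N\in\mathbb{N}$ consider states $\tilde\chi_i=(x_{1,i},x_{2,i},x_{3,i},x_{4,i})\in\mathbb{R}^4$, $i=0,\dots,N$, with $g_i:=a\psi^{i-1}_{\Delta p}+b\psi^{i-1}_{\Delta v}$ and dynamics $$\begin{aligned}\dot x_{1,i}&=x_{2,i},\\ \dot x_{2,i}&=-(x_{1,i}+x_{3,i})-K_{\Delta v}\big(x_{2,i}-\lambda_1x_{3,i}+x_{4,i}+K_{\Delta p}(x_{1,i}+x_{3,i})\big)+(K_{\Delta p}-\lambda_1)(\lambda_1x_{3,i}-x_{4,i})+\lambda_2x_{4,i}-K_{\Delta p}x_{2,i}-g_i,\\ \dot x_{3,i}&=-\lambda_1x_{3,i}+x_{4,i},\\ \dot x_{4,i}&=-\lambda_2x_{4,i}+g_i,\end{aligned}$$ where $\psi^{-1}_{\Delta p}=\psi^{-1}_{\Delta v}=0$ and, for $i\ge1$, with $m=i-1$, $$\psi^{m}_{\Delta p}=\gamma_{\Delta p}\,\mathrm{sign}\Big(\tfrac{1}{m+1}\textstyle\sum_{j=0}^{m}x_{1,j}\Big)\sqrt{\sigma^2_{1,m}},\qquad \psi^{m}_{\Delta v}=\gamma_{\Delta v}\,\mathrm{sign}\Big(\tfrac{1}{m+1}\textstyle\sum_{j=0}^{m}x_{2,j}\Big)\sqrt{\sigma^2_{2,m}},$$ $\sigma^2_{k,m}$ being the population variance of $x_{k,0},\dots,x_{k,m}$.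 (Here $x_{1,i}=\Delta p_i+\Delta\bar p$, $x_{2,i}=\Delta v_i$, $(x_{3,i},x_{4,i})=(\rho_{1,i},\rho_{2,i})$; this is the closed loop of the variable-spacing policy with reference distance $\Delta p^r_i=-\Delta\bar p-\rho_{1,i}$ and reference speed difference $\Delta v^r_i=\lambda_1\rho_{1,i}-\rho_{2,i}-K_{\Delta p}(\Delta p_i-\Delta p^r_i)$.) Assume solutions exist on $[0,\infty)$. Then: (1) the origin of each isolated subsystem (with $g_i$ replaced by $0$) is globally exponentially stable; (2) there exist $\beta^{vp}\in\mathcal{KL}$ and $\tilde\gamma^{vp}>0$ such that for every $N$, every solution, every $i$ and all $t\ge0$, $$|\tilde\chi_i(t)|\le\beta^{vp}(|\tilde\chi_i(0)|,t)+\tilde\gamma^{vp}\max_{j=0,\dots,i-1}\sup_{0\le\tau\le t}|\tilde\chi_j(\tau)|;$$ (3) there exist $a,b\ge0$ (not both zero) for which this holds with $\tilde\gamma^{vp}\in(0,1)$, and for such $a,b$ the origin of the interconnected system is Asymptotically String Stable.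
   Context: $|\cdot|$ is the Euclidean norm; $\mathrm{sign}$ takes values in $\{-1,0,1\}$. String Stability of the origin means: for every $\epsilon>0$ there exists $\delta>0$ such that for all $N\in\mathbb{N}$ and every solution, $\max_{i=0,\dots,N}|\tilde\chi_i(0)|<\delta$ implies $\max_{i=0,\dots,N}|\tilde\chi_i(t)|<\epsilon$ for all $t\ge0$. Asymptotic String Stability means String Stability together with: for all $N$, every solution satisfies $\lim_{t\to\infty}|\tilde\chi_i(t)|=0$ for all $i=0,\dots,N$. *)

theory Defs
  imports "HOL-Analysis.Analysis"
begin

text \<open>States live in real^4; the components x1,x2,x3,x4 are the coordinates
  indexed by 1,2,3,4 of the numeral type 4 (4 coincides with 0 there, but the
  four indices are pairwise distinct).\<close>

definition x1 :: "real^4 \<Rightarrow> real" where "x1 s = s $ 1"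
definition x2 :: "real^4 \<Rightarrow> real" where "x2 s = s $ 2"
definition x3 :: "real^4 \<Rightarrow> real" where "x3 s = s $ 3"
definition x4 :: "real^4 \<Rightarrow> real" where "x4 s = s $ 4"

definition vp_field :: "real \<Rightarrow> real \<Rightarrow> real \<Rightarrow> real \<Rightarrow> real^4 \<Rightarrow> real \<Rightarrow> real^4" where
  "vp_field Kp Kv l1 l2 s g = (\<chi> k.
     if k = 1 then x2 s
     else if k = 2 then
       - (x1 s + x3 s)
       - Kv * (x2 s - l1 * x3 s + x4 s + Kp * (x1 s + x3 s))
       + (Kp - l1) * (l1 * x3 s - x4 s) + l2 * x4 s - Kp * x2 s - g
     else if k = 3 then - l1 * x3 s + x4 s
     else - l2 * x4 s + g)"

definition smean :: "(nat \<Rightarrow> real) \<Rightarrow> nat \<Rightarrow> real" where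
  "smean f m = (\<Sum>j\<le>m. f j) / real (m + 1)"

definition pvar :: "(nat \<Rightarrow> real) \<Rightarrow> nat \<Rightarrow> real" where
  "pvar f m = (\<Sum>j\<le>m. (f j - smean f m)\<^sup>2) / real (m + 1)"

definition psi :: "real \<Rightarrow> (nat \<Rightarrow> real) \<Rightarrow> nat \<Rightarrow> real" where
  "psi \<gamma> f m = \<gamma> * sgn (smean f m) * sqrt (pvar f m)"

definition gin :: "real \<Rightarrow> real \<Rightarrow> real \<Rightarrow> real \<Rightarrow> (nat \<Rightarrow> real \<Rightarrow> real^4) \<Rightarrow> nat \<Rightarrow> real \<Rightarrow> real" where
  "gin a b \<gamma>p \<gamma>v \<chi>s i t =
     (if i = 0 then 0
      else a * psi \<gamma>p (\<lambda>j. x1 (\<chi>s j t)) (i - 1) + b * psi \<gamma>v (\<lambda>j. x2 (\<chi>s j t)) (i - 1))"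

definition vp_sol :: "real \<Rightarrow> real \<Rightarrow> real \<Rightarrow> real \<Rightarrow> real \<Rightarrow> real \<Rightarrow> real \<Rightarrow> real \<Rightarrow> nat
    \<Rightarrow> (nat \<Rightarrow> real \<Rightarrow> real^4) \<Rightarrow> bool" where
  "vp_sol Kp Kv l1 l2 \<gamma>p \<gamma>v a b N \<chi>s \<longleftrightarrow>
     (\<forall>i\<le>N. \<forall>t\<ge>0. (\<chi>s i has_vector_derivative
         vp_field Kp Kv l1 l2 (\<chi>s i t) (gin a b \<gamma>p \<gamma>v \<chi>s i t)) (at t within {0..}))"

definition iso_sol :: "real \<Rightarrow> real \<Rightarrow> real \<Rightarrow> real \<Rightarrow> (real \<Rightarrow> real^4) \<Rightarrow> bool" where
  "iso_sol Kp Kv l1 l2 x \<longleftrightarrow>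
     (\<forall>t\<ge>0. (x has_vector_derivative vp_field Kp Kv l1 l2 (x t) 0) (at t within {0..}))"

definition iso_GES :: "real \<Rightarrow> real \<Rightarrow> real \<Rightarrow> real \<Rightarrow> bool" where
  "iso_GES Kp Kv l1 l2 \<longleftrightarrow>
     (\<exists>M c. M > 0 \<and> c > 0 \<and>
        (\<forall>x. iso_sol Kp Kv l1 l2 x \<longrightarrow>
           (\<forall>t\<ge>0. norm (x t) \<le> M * norm (x 0) * exp (- c * t))))"

definition classK :: "(real \<Rightarrow> real) \<Rightarrow> bool" where
  "classK \<alpha> \<longleftrightarrow> continuous_on {0..} \<alpha> \<and> strict_mono_on {0..} \<alpha> \<and> \<alpha> 0 = 0"

definition classKL :: "(real \<Rightarrow> real \<Rightarrow> real) \<Rightarrow> bool" where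
  "classKL \<beta> \<longleftrightarrow>
     (\<forall>t\<ge>0. classK (\<lambda>r. \<beta> r t)) \<and>
     (\<forall>r\<ge>0. antimono_on {0..} (\<beta> r) \<and> ((\<beta> r) \<longlongrightarrow> 0) at_top)"

definition pred_sup :: "(nat \<Rightarrow> real \<Rightarrow> real^4) \<Rightarrow> nat \<Rightarrow> real \<Rightarrow> real" where
  "pred_sup \<chi>s i t =
     (if i = 0 then 0 else Max ((\<lambda>j. Sup ((\<lambda>\<tau>. norm (\<chi>s j \<tau>)) ` {0..t})) ` {..<i}))"

definition vp_gain_bound :: "real \<Rightarrow> real \<Rightarrow> real \<Rightarrow> real \<Rightarrow> real \<Rightarrow> real \<Rightarrow> real \<Rightarrow> real
    \<Rightarrow> (real \<Rightarrow> real \<Rightarrow> real) \<Rightarrow> real \<Rightarrow> bool" where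
  "vp_gain_bound Kp Kv l1 l2 \<gamma>p \<gamma>v a b \<beta> g \<longleftrightarrow>
     (\<forall>N \<chi>s. vp_sol Kp Kv l1 l2 \<gamma>p \<gamma>v a b N \<chi>s \<longrightarrow>
        (\<forall>i\<le>N. \<forall>t\<ge>0. norm (\<chi>s i t) \<le> \<beta> (norm (\<chi>s i 0)) t + g * pred_sup \<chi>s i t))"

definition string_stable :: "real \<Rightarrow> real \<Rightarrow> real \<Rightarrow> real \<Rightarrow> real \<Rightarrow> real \<Rightarrow> real \<Rightarrow> real \<Rightarrow> bool" where
  "string_stable Kp Kv l1 l2 \<gamma>p \<gamma>v a b \<longleftrightarrow>
     (\<forall>\<epsilon>>0. \<exists>\<delta>>0. \<forall>N \<chi>s. vp_sol Kp Kv l1 l2 \<gamma>p \<gamma>v a b N \<chi>s \<longrightarrow>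
        (\<forall>i\<le>N. norm (\<chi>s i 0) < \<delta>) \<longrightarrow> (\<forall>t\<ge>0. \<forall>i\<le>N. norm (\<chi>s i t) < \<epsilon>))"

definition asym_string_stable :: "real \<Rightarrow> real \<Rightarrow> real \<Rightarrow> real \<Rightarrow> real \<Rightarrow> real \<Rightarrow> real \<Rightarrow> real \<Rightarrow> bool" where
  "asym_string_stable Kp Kv l1 l2 \<gamma>p \<gamma>v a b \<longleftrightarrow>
     string_stable Kp Kv l1 l2 \<gamma>p \<gamma>v a b \<and>
     (\<forall>N \<chi>s. vp_sol Kp Kv l1 l2 \<gamma>p \<gamma>v a b N \<chi>s \<longrightarrow>
        (\<forall>i\<le>N. ((\<lambda>t. norm (\<chi>s i t)) \<longlongrightarrow> 0) at_top))"

end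

theory Submission
  imports Defs "HOL-Real_Asymp.Real_Asymp"
begin

lemma vf1: "vp_field Kp Kv l1 l2 s g $ 1 = s$2" by (simp add: vp_field_def x2_def)
lemma vf2: "vp_field Kp Kv l1 l2 s g $ 2 = - (s$1 + s$3)
       - Kv * (s$2 - l1 * s$3 + s$4 + Kp * (s$1 + s$3))
       + (Kp - l1) * (l1 * s$3 - s$4) + l2 * s$4 - Kp * s$2 - g" by (simp add: vp_field_def x1_def x2_def x3_def x4_def)
lemma vf3: "vp_field Kp Kv l1 l2 s g $ 3 = - l1 * s$3 + s$4" by (simp add: vp_field_def x3_def x4_def)
lemma vf4: "vp_field Kp Kv l1 l2 s g $ 4 = - l2 * s$4 + g" by (simp add: vp_field_def x3_def x4_def)

lemma comp_deriv:
  assumes "(x has_vector_derivative D) (at t within S)"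
  shows "((\<lambda>t. x t $ k) has_real_derivative D $ k) (at t within S)"
  using bounded_linear.has_vector_derivative[OF bounded_linear_vec_nth assms, of k]
  by (simp add: has_real_derivative_iff_has_vector_derivative)

lemma comparison:
  fixes V V' :: "real \<Rightarrow> real" and c K t0 :: real
  assumes c: "c > 0" and K: "K \<ge> 0" and t0: "t0 \<ge> 0"
    and d: "\<And>t. 0 \<le> t \<Longrightarrow> t \<le> t0 \<Longrightarrow> (V has_real_derivative V' t) (at t within {0..})"
    and le: "\<And>t. 0 \<le> t \<Longrightarrow> t \<le> t0 \<Longrightarrow> V' t \<le> - c * V t + K"
  shows "V t0 \<le> exp (- c * t0) * V 0 + K / c"
proof -
  define W where "W t = exp (c * t) * (V t - K / c)" for t
  have dW: "(W has_real_derivative (exp (c*t) * c * (V t - K/c) + exp (c*t) * V' t)) (at t within {0..})"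
    if "0 \<le> t" "t \<le> t0" for t
    unfolding W_def
    by (rule derivative_eq_intros d that refl)+ simp
  have cont: "continuous_on {0..t0} W"
  proof -
    have "continuous (at t within {0..}) W" if "t \<in> {0..t0}" for t
      using dW[of t] that DERIV_continuous by auto
    then show ?thesis
      unfolding continuous_on_eq_continuous_within
      by (metis atLeastAtMost_iff atLeast_iff continuous_within_subset subsetI)
  qed
  have "W t0 \<le> W 0"
  proof (rule DERIV_nonpos_imp_decreasing_open[OF t0 _ cont])
    fix t assume t: "0 < t" "t < t0"
    have "at t within {0..} = at t"
      by (rule at_within_interior) (use t in simp)
    with dW[of t] t have "DERIV W t :> (exp (c*t) * c * (V t - K/c) + exp (c*t) * V' t)" by simp
    moreover have "exp (c*t) * c * (V t - K/c) + exp (c*t) * V' t \<le> 0"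
    proof -
      have "c * (V t - K/c) + V' t \<le> 0" using le[of t] t c by (simp add: algebra_simps)
      then have "exp (c*t) * (c * (V t - K/c) + V' t) \<le> 0"
        by (simp add: mult_nonneg_nonpos)
      then show ?thesis by (simp add: distrib_left mult.assoc)
    qed
    ultimately show "\<exists>y. DERIV W t :> y \<and> y \<le> 0" by blast
  qed
  then have "exp (c*t0) * (V t0 - K/c) \<le> V 0 - K/c" by (simp add: W_def)
  then have "exp (-c*t0) * (exp (c*t0) * (V t0 - K/c)) \<le> exp (-c*t0) * (V 0 - K/c)"
    by (simp add: mult_left_mono)
  then have "V t0 - K/c \<le> exp (-c*t0) * (V 0 - K/c)"
  proof -
    have "exp (-c*t0) * exp (c*t0) = 1" by (simp flip: exp_add)
    then show "exp (-c*t0) * (exp (c*t0) * (V t0 - K/c)) \<le> exp (-c*t0) * (V 0 - K/c) \<Longrightarrow> ?thesis"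
      by (metis mult.assoc mult_1)
  qed
  moreover have "exp (-c*t0) * (K/c) \<ge> 0" using K c by simp
  ultimately show ?thesis by (simp add: algebra_simps)
qed

lemma sqrt4_le:
  fixes a b c d k :: real assumes "k \<ge> 0"
  shows "sqrt (a\<^sup>2 + b\<^sup>2 + c\<^sup>2 + k * d\<^sup>2) \<le> \<bar>a\<bar> + \<bar>b\<bar> + \<bar>c\<bar> + sqrt k * \<bar>d\<bar>"
proof (rule real_le_lsqrt)
  show "0 \<le> \<bar>a\<bar> + \<bar>b\<bar> + \<bar>c\<bar> + sqrt k * \<bar>d\<bar>" using assms by simp
  have sk: "(sqrt k * \<bar>d\<bar>)\<^sup>2 = k * d\<^sup>2" using assms by (simp add: power_mult_distrib)
  have h1: "(\<bar>a\<bar> + \<bar>b\<bar>)\<^sup>2 \<ge> a\<^sup>2 + b\<^sup>2"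
    by (simp add: power2_sum)
  have h2: "(\<bar>a\<bar> + \<bar>b\<bar> + \<bar>c\<bar>)\<^sup>2 \<ge> (\<bar>a\<bar> + \<bar>b\<bar>)\<^sup>2 + c\<^sup>2"
    by (simp add: power2_sum[of "\<bar>a\<bar> + \<bar>b\<bar>"])
  have h3: "(\<bar>a\<bar> + \<bar>b\<bar> + \<bar>c\<bar> + sqrt k * \<bar>d\<bar>)\<^sup>2 \<ge> (\<bar>a\<bar> + \<bar>b\<bar> + \<bar>c\<bar>)\<^sup>2 + (sqrt k * \<bar>d\<bar>)\<^sup>2"
    using assms by (simp add: power2_sum[of "\<bar>a\<bar> + \<bar>b\<bar> + \<bar>c\<bar>"])
  show "a\<^sup>2 + b\<^sup>2 + c\<^sup>2 + k * d\<^sup>2 \<le> (\<bar>a\<bar> + \<bar>b\<bar> + \<bar>c\<bar> + sqrt k * \<bar>d\<bar>)\<^sup>2"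
    using h1 h2 h3 sk by linarith
qed

lemma core:
  fixes Kp Kv l1 l2 :: real
  assumes pos: "Kp > 0" "Kv > 0" "l1 > 0" "l2 > 0"
  defines "k \<equiv> 2 / (l1 * l2)"
  defines "c \<equiv> min (min (2*Kp) (2*Kv)) (min l1 (l2/2))"
  defines "P \<equiv> 4 + Kp + l1 + 2 / sqrt k"
  defines "Q \<equiv> 5 + l1 + 2 * Kp + sqrt k"
  defines "L \<equiv> P * sqrt (k / l2 / c)"
  assumes der: "\<And>t. t \<ge> 0 \<Longrightarrow> (x has_vector_derivative vp_field Kp Kv l1 l2 (x t) (u t)) (at t within {0..})"
    and t0: "t0 \<ge> 0" and S: "\<And>\<tau>. 0 \<le> \<tau> \<Longrightarrow> \<tau> \<le> t0 \<Longrightarrow> \<bar>u \<tau>\<bar> \<le> S"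
  shows "norm (x t0) \<le> (P * Q) * norm (x 0) * exp (- (c/2) * t0) + L * S"
proof -
  have kpos: "k > 0" using pos by (simp add: k_def)
  have cpos: "c > 0" using pos by (simp add: c_def)
  have S0: "S \<ge> 0" using S[of 0] t0 by auto
  define e where "e t = x t $ 1 + x t $ 3" for t
  define z where "z t = x t $ 2 - l1 * x t $ 3 + x t $ 4 + Kp * (x t $ 1 + x t $ 3)" for t
  define p where "p t = x t $ 3" for t
  define q where "q t = x t $ 4" for t
  define V where "V t = (e t)\<^sup>2 + (z t)\<^sup>2 + (p t)\<^sup>2 + k * (q t)\<^sup>2" for t
  define V' where "V' t = 2 * e t * (z t - Kp * e t) + 2 * z t * (- e t - Kv * z t)
     + 2 * p t * (- l1 * p t + q t) + k * (2 * q t * (- l2 * q t + u t))" for t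
  have dV: "(V has_real_derivative V' t) (at t within {0..})" if "t \<ge> 0" for t
  proof -
    note d = comp_deriv[OF der[OF that]]
    have "(V has_real_derivative
       2 * e t * (vp_field Kp Kv l1 l2 (x t) (u t) $ 1 + vp_field Kp Kv l1 l2 (x t) (u t) $ 3)
     + 2 * z t * (vp_field Kp Kv l1 l2 (x t) (u t) $ 2 - l1 * vp_field Kp Kv l1 l2 (x t) (u t) $ 3
          + vp_field Kp Kv l1 l2 (x t) (u t) $ 4 + Kp * (vp_field Kp Kv l1 l2 (x t) (u t) $ 1 + vp_field Kp Kv l1 l2 (x t) (u t) $ 3))
     + 2 * p t * vp_field Kp Kv l1 l2 (x t) (u t) $ 3
     + k * (2 * q t * vp_field Kp Kv l1 l2 (x t) (u t) $ 4)) (at t within {0..})"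
      unfolding V_def e_def z_def p_def q_def
      by (rule derivative_eq_intros d refl)+ (simp add: algebra_simps)
    moreover have "2 * e t * (vp_field Kp Kv l1 l2 (x t) (u t) $ 1 + vp_field Kp Kv l1 l2 (x t) (u t) $ 3)
     + 2 * z t * (vp_field Kp Kv l1 l2 (x t) (u t) $ 2 - l1 * vp_field Kp Kv l1 l2 (x t) (u t) $ 3
          + vp_field Kp Kv l1 l2 (x t) (u t) $ 4 + Kp * (vp_field Kp Kv l1 l2 (x t) (u t) $ 1 + vp_field Kp Kv l1 l2 (x t) (u t) $ 3))
     + 2 * p t * vp_field Kp Kv l1 l2 (x t) (u t) $ 3
     + k * (2 * q t * vp_field Kp Kv l1 l2 (x t) (u t) $ 4) = V' t"
      unfolding vf1 vf2 vf3 vf4 V'_def e_def z_def p_def q_def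
      by (simp add: algebra_simps)
    ultimately show ?thesis by simp
  qed
  have V'le: "V' t \<le> - c * V t + (k / l2) * S\<^sup>2" if "0 \<le> t" "t \<le> t0" for t
  proof -
    have u2: "(u t)\<^sup>2 \<le> S\<^sup>2" using S[OF that] S0
      by (metis abs_le_square_iff abs_of_nonneg)
    have a1: "2 * p t * q t \<le> l1 * (p t)\<^sup>2 + (q t)\<^sup>2 / l1"
    proof -
      have "0 \<le> (l1 * p t - q t)\<^sup>2 / l1" using pos by simp
      also have "(l1 * p t - q t)\<^sup>2 / l1 = l1 * (p t)\<^sup>2 + (q t)\<^sup>2 / l1 - 2 * p t * q t"
        using pos by (simp add: power2_eq_square field_simps)
      finally show ?thesis by simp
    qed
    have a2: "2 * q t * u t \<le> l2 * (q t)\<^sup>2 + (u t)\<^sup>2 / l2"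
    proof -
      have "0 \<le> (l2 * q t - u t)\<^sup>2 / l2" using pos by simp
      also have "(l2 * q t - u t)\<^sup>2 / l2 = l2 * (q t)\<^sup>2 + (u t)\<^sup>2 / l2 - 2 * q t * u t"
        using pos by (simp add: power2_eq_square field_simps)
      finally show ?thesis by simp
    qed
    have ka: "k * (2 * q t * u t) \<le> k * (l2 * (q t)\<^sup>2 + (u t)\<^sup>2 / l2)"
      using a2 kpos by (simp add: mult_left_mono)
    have eqV': "V' t = - 2*Kp*(e t)\<^sup>2 - 2*Kv*(z t)\<^sup>2 - 2*l1*(p t)\<^sup>2 + 2 * p t * q t
        - 2*k*l2*(q t)\<^sup>2 + k * (2 * q t * u t)"
      unfolding V'_def by (simp add: power2_eq_square algebra_simps)
    have kl: "k * l2 = 2 / l1" using pos by (simp add: k_def)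
    have "V' t \<le> - 2*Kp*(e t)\<^sup>2 - 2*Kv*(z t)\<^sup>2 - l1*(p t)\<^sup>2 - (1/l1) * (q t)\<^sup>2 + (k/l2) * (u t)\<^sup>2"
    proof -
      have "k * (l2 * (q t)\<^sup>2) = 2 * (q t)\<^sup>2 / l1" using kl by (simp add: mult.assoc[symmetric])
      moreover have "k * ((u t)\<^sup>2 / l2) = (k/l2) * (u t)\<^sup>2" by simp
      moreover have "2*k*l2*(q t)\<^sup>2 = 2 * (2 * (q t)\<^sup>2 / l1)"
      proof -
        have "2*k*l2*(q t)\<^sup>2 = 2 * (k*l2) * (q t)\<^sup>2" by simp
        then show ?thesis using kl by simp
      qed
      moreover have "2 * (q t)\<^sup>2 / l1 = (q t)\<^sup>2 / l1 + (1/l1) * (q t)\<^sup>2" by simp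
      ultimately show ?thesis using eqV' a1 ka by (simp only: distrib_left)
    qed
    also have "\<dots> \<le> - c*(e t)\<^sup>2 - c*(z t)\<^sup>2 - c*(p t)\<^sup>2 - c * k * (q t)\<^sup>2 + (k/l2) * S\<^sup>2"
    proof -
      have "c \<le> 2*Kp" "c \<le> 2*Kv" "c \<le> l1" "c \<le> l2/2" by (simp_all add: c_def min_le_iff_disj)
      have "c * (e t)\<^sup>2 \<le> 2*Kp*(e t)\<^sup>2" by (rule mult_right_mono) (use \<open>c \<le> 2*Kp\<close> in auto)
      moreover have "c * (z t)\<^sup>2 \<le> 2*Kv*(z t)\<^sup>2" by (rule mult_right_mono) (use \<open>c \<le> 2*Kv\<close> in auto)
      moreover have "c * (p t)\<^sup>2 \<le> l1*(p t)\<^sup>2" by (rule mult_right_mono) (use \<open>c \<le> l1\<close> in auto)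
      moreover have "c * k \<le> 1 / l1"
      proof -
        have "c * k \<le> (l2/2) * k" using \<open>c \<le> l2/2\<close> kpos by (simp add: mult_right_mono)
        also have "(l2/2) * k = 1 / l1" using pos by (simp add: k_def)
        finally show ?thesis .
      qed
      then have "c * k * (q t)\<^sup>2 \<le> (1/l1) * (q t)\<^sup>2" by (rule mult_right_mono) simp
      moreover have "(k/l2) * (u t)\<^sup>2 \<le> (k/l2) * S\<^sup>2" by (rule mult_left_mono) (use u2 kpos pos in auto)
      ultimately show ?thesis by linarith
    qed
    also have "\<dots> = - c * V t + (k / l2) * S\<^sup>2" by (simp add: V_def algebra_simps)
    finally show ?thesis .
  qed
  have K0: "(k / l2) * S\<^sup>2 \<ge> 0" using kpos pos by simp
  have Vt0: "V t0 \<le> exp (- c * t0) * V 0 + (k / l2) * S\<^sup>2 / c"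
    by (rule comparison[OF cpos K0 t0 dV V'le]) auto
  have V0: "V t \<ge> 0" for t using kpos by (simp add: V_def)
  have sqV: "sqrt (V t0) \<le> exp (- (c/2) * t0) * sqrt (V 0) + sqrt (k / l2 / c) * S"
  proof -
    have "sqrt (V t0) \<le> sqrt (exp (- c * t0) * V 0 + (k / l2) * S\<^sup>2 / c)"
      using Vt0 by (rule real_sqrt_le_mono)
    also have "\<dots> \<le> sqrt (exp (- c * t0) * V 0) + sqrt ((k / l2) * S\<^sup>2 / c)"
      by (rule sqrt_add_le_add_sqrt) (use V0 kpos pos cpos in auto)
    also have "sqrt (exp (- c * t0) * V 0) = exp (- (c/2) * t0) * sqrt (V 0)"
    proof -
      have "exp (- c * t0) = (exp (- (c/2) * t0))\<^sup>2" by (simp flip: exp_add add: power2_eq_square)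
      then show ?thesis by (simp add: real_sqrt_mult)
    qed
    also have "sqrt ((k / l2) * S\<^sup>2 / c) = sqrt (k / l2 / c) * S"
      using S0 by (simp add: real_sqrt_mult real_sqrt_divide)
    finally show ?thesis .
  qed
  have up: "norm (x t) \<le> P * sqrt (V t)" for t
  proof -
    have n1: "norm (x t) \<le> \<bar>x t $ 1\<bar> + \<bar>x t $ 2\<bar> + \<bar>x t $ 3\<bar> + \<bar>x t $ 4\<bar>"
      using norm_le_l1_cart[of "x t"] by (simp add: sum_4)
    have eqs: "x t $ 1 = e t - p t" "x t $ 2 = z t + l1 * p t - q t - Kp * e t" "x t $ 3 = p t" "x t $ 4 = q t"
      by (simp_all add: e_def z_def p_def q_def algebra_simps)
    have n1': "norm (x t) \<le> \<bar>e t - p t\<bar> + \<bar>z t + l1 * p t - q t - Kp * e t\<bar> + \<bar>p t\<bar> + \<bar>q t\<bar>"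
      using n1 unfolding eqs .
    have n2: "norm (x t) \<le> (1+Kp) * \<bar>e t\<bar> + \<bar>z t\<bar> + (2+l1) * \<bar>p t\<bar> + 2 * \<bar>q t\<bar>"
    proof -
      have "(1+Kp) * \<bar>e t\<bar> = \<bar>e t\<bar> + Kp * \<bar>e t\<bar>" "(2+l1) * \<bar>p t\<bar> = 2 * \<bar>p t\<bar> + l1 * \<bar>p t\<bar>"
        by (simp_all add: distrib_right)
      moreover have "\<bar>- Kp * e t\<bar> = Kp * \<bar>e t\<bar>" "\<bar>l1 * p t\<bar> = l1 * \<bar>p t\<bar>" using pos by (simp_all add: abs_mult)
      moreover have "z t + l1 * p t - q t - Kp * e t = (z t + l1 * p t - q t) + (- Kp * e t)" by simp
      ultimately show ?thesis using n1' abs_triangle_ineq4[of "e t" "p t"]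
        abs_triangle_ineq[of "z t + l1 * p t - q t" "- Kp * e t"]
        abs_triangle_ineq4[of "z t + l1 * p t" "q t"] abs_triangle_ineq[of "z t" "l1 * p t"]
        by linarith
    qed
    have be: "\<bar>e t\<bar> \<le> sqrt (V t)" "\<bar>z t\<bar> \<le> sqrt (V t)" "\<bar>p t\<bar> \<le> sqrt (V t)"
      using kpos by (auto intro!: real_le_rsqrt simp: V_def)
    have bq: "sqrt k * \<bar>q t\<bar> \<le> sqrt (V t)"
      using kpos by (auto intro!: real_le_rsqrt simp: V_def power_mult_distrib)
    then have bq': "\<bar>q t\<bar> \<le> sqrt (V t) / sqrt k" using kpos by (simp add: field_simps)
    have "(1+Kp) * \<bar>e t\<bar> \<le> (1+Kp) * sqrt (V t)" using be pos by (simp add: mult_left_mono)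
    moreover have "(2+l1) * \<bar>p t\<bar> \<le> (2+l1) * sqrt (V t)" using be pos by (simp add: mult_left_mono)
    moreover have "2 * \<bar>q t\<bar> \<le> 2 * (sqrt (V t) / sqrt k)" using bq' by simp
    ultimately have "norm (x t) \<le> (1+Kp) * sqrt (V t) + sqrt (V t) + (2+l1) * sqrt (V t) + 2 * (sqrt (V t) / sqrt k)"
      using n2 be by linarith
    also have "\<dots> = P * sqrt (V t)" by (simp add: P_def algebra_simps)
    finally show ?thesis .
  qed
  have lo: "sqrt (V t) \<le> Q * norm (x t)" for t
  proof -
    have "sqrt (V t) \<le> \<bar>e t\<bar> + \<bar>z t\<bar> + \<bar>p t\<bar> + sqrt k * \<bar>q t\<bar>"
      unfolding V_def using kpos by (intro sqrt4_le) simp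
    also have "\<dots> \<le> 2 * norm (x t) + (2 + l1 + 2 * Kp) * norm (x t) + norm (x t) + sqrt k * norm (x t)"
    proof -
      have c1: "\<bar>x t $ i\<bar> \<le> norm (x t)" for i by (rule component_le_norm_cart)
      have "\<bar>e t\<bar> \<le> 2 * norm (x t)" using c1[of 1] c1[of 3] by (simp add: e_def)
      moreover have "\<bar>z t\<bar> \<le> (2 + l1 + 2 * Kp) * norm (x t)"
      proof -
        have "\<bar>z t\<bar> \<le> \<bar>x t $ 2\<bar> + l1 * \<bar>x t $ 3\<bar> + \<bar>x t $ 4\<bar> + Kp * (\<bar>x t $ 1\<bar> + \<bar>x t $ 3\<bar>)"
        proof -
          have "\<bar>l1 * x t $ 3\<bar> = l1 * \<bar>x t $ 3\<bar>" "\<bar>Kp * (x t $ 1 + x t $ 3)\<bar> = Kp * \<bar>x t $ 1 + x t $ 3\<bar>"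
            using pos by (simp_all add: abs_mult)
          moreover have "Kp * \<bar>x t $ 1 + x t $ 3\<bar> \<le> Kp * (\<bar>x t $ 1\<bar> + \<bar>x t $ 3\<bar>)"
            using pos abs_triangle_ineq by (intro mult_left_mono) auto
          ultimately show ?thesis unfolding z_def
            using abs_triangle_ineq[of "x t $ 2 - l1 * x t $ 3 + x t $ 4" "Kp * (x t $ 1 + x t $ 3)"]
              abs_triangle_ineq[of "x t $ 2 - l1 * x t $ 3" "x t $ 4"]
              abs_triangle_ineq4[of "x t $ 2" "l1 * x t $ 3"]
            by linarith
        qed
        also have "\<dots> \<le> norm (x t) + l1 * norm (x t) + norm (x t) + Kp * (norm (x t) + norm (x t))"
          using c1[of 1] c1[of 2] c1[of 3] c1[of 4] pos
          by (intro add_mono mult_left_mono) auto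
        finally show ?thesis by (simp add: algebra_simps)
      qed
      moreover have "\<bar>p t\<bar> \<le> norm (x t)" using c1 by (simp add: p_def)
      moreover have "sqrt k * \<bar>q t\<bar> \<le> sqrt k * norm (x t)" using c1 kpos by (simp add: q_def mult_left_mono)
      ultimately show ?thesis by linarith
    qed
    also have "\<dots> = Q * norm (x t)" by (simp add: Q_def algebra_simps)
    finally show ?thesis .
  qed
  have Ppos: "P \<ge> 0" using pos kpos by (simp add: P_def)
  have "norm (x t0) \<le> P * sqrt (V t0)" by (rule up)
  also have "\<dots> \<le> P * (exp (- (c/2) * t0) * sqrt (V 0) + sqrt (k / l2 / c) * S)"
    using sqV Ppos by (simp add: mult_left_mono)
  also have "\<dots> \<le> P * (exp (- (c/2) * t0) * (Q * norm (x 0)) + sqrt (k / l2 / c) * S)"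
    using lo[of 0] Ppos kpos pos cpos by (intro mult_left_mono add_mono) auto
  also have "\<dots> = (P * Q) * norm (x 0) * exp (- (c/2) * t0) + L * S"
    by (simp add: L_def algebra_simps)
  finally show ?thesis .
qed

lemma core_ex:
  fixes Kp Kv l1 l2 :: real
  assumes pos: "Kp > 0" "Kv > 0" "l1 > 0" "l2 > 0"
  shows "\<exists>M c L. M > 0 \<and> c > 0 \<and> L > 0 \<and>
    (\<forall>x u t0 S. (\<forall>t\<ge>0. (x has_vector_derivative vp_field Kp Kv l1 l2 (x t) (u t)) (at t within {0..}))
       \<longrightarrow> t0 \<ge> 0 \<longrightarrow> (\<forall>\<tau>. 0 \<le> \<tau> \<longrightarrow> \<tau> \<le> t0 \<longrightarrow> \<bar>u \<tau>\<bar> \<le> S)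
       \<longrightarrow> norm (x t0) \<le> M * norm (x 0) * exp (- c * t0) + L * S)"
proof -
  define k where "k \<equiv> 2 / (l1 * l2)"
  define c where "c \<equiv> min (min (2*Kp) (2*Kv)) (min l1 (l2/2))"
  define P where "P \<equiv> 4 + Kp + l1 + 2 / sqrt k"
  define Q where "Q \<equiv> 5 + l1 + 2 * Kp + sqrt k"
  define L where "L \<equiv> P * sqrt (k / l2 / c)"
  have kpos: "k > 0" using pos by (simp add: k_def)
  have cpos: "c > 0" using pos by (simp add: c_def)
  have "2 / sqrt k > 0" using kpos by simp
  then have "P > 0" using pos unfolding P_def by linarith
  moreover have "Q > 0" using pos kpos real_sqrt_ge_zero[of k] unfolding Q_def by linarith
  moreover have "L > 0" using \<open>P > 0\<close> kpos cpos pos by (simp add: L_def)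
  moreover have "c/2 > 0" using cpos by simp
  moreover have "\<forall>x u t0 S. (\<forall>t\<ge>0. (x has_vector_derivative vp_field Kp Kv l1 l2 (x t) (u t)) (at t within {0..}))
       \<longrightarrow> t0 \<ge> 0 \<longrightarrow> (\<forall>\<tau>. 0 \<le> \<tau> \<longrightarrow> \<tau> \<le> t0 \<longrightarrow> \<bar>u \<tau>\<bar> \<le> S)
       \<longrightarrow> norm (x t0) \<le> (P*Q) * norm (x 0) * exp (- (c/2) * t0) + L * S"
    using core[OF pos] unfolding k_def c_def P_def Q_def L_def by blast
  ultimately show ?thesis by (intro exI[of _ "P*Q"] exI[of _ "c/2"] exI[of _ L]) auto
qed

lemma psi_bound:
  fixes f :: "nat \<Rightarrow> real"
  assumes g: "\<gamma> \<ge> 0" and B: "\<And>j. j \<le> m \<Longrightarrow> \<bar>f j\<bar> \<le> B"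
  shows "\<bar>psi \<gamma> f m\<bar> \<le> \<gamma> * (2 * B)"
proof -
  have B0: "B \<ge> 0" using B[of 0] by auto
  have "\<bar>\<Sum>j\<le>m. f j\<bar> \<le> (\<Sum>j\<le>m. B)"
    using B by (intro order_trans[OF sum_abs sum_mono]) auto
  then have mu: "\<bar>smean f m\<bar> \<le> B"
    by (simp add: smean_def divide_le_eq mult.commute)
  have "(f j - smean f m)\<^sup>2 \<le> (2*B)\<^sup>2" if "j \<le> m" for j
  proof -
    have "\<bar>f j - smean f m\<bar> \<le> 2*B" using B[OF that] mu by linarith
    then show ?thesis by (metis abs_le_square_iff abs_of_nonneg B0 mult_nonneg_nonneg zero_le_numeral)
  qed
  then have "(\<Sum>j\<le>m. (f j - smean f m)\<^sup>2) \<le> (\<Sum>j\<le>(m::nat). (2*B)\<^sup>2)" by (intro sum_mono) auto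
  then have pv: "pvar f m \<le> (2*B)\<^sup>2" by (simp add: pvar_def divide_le_eq mult.commute)
  have pvar0: "pvar f m \<ge> 0" by (simp add: pvar_def sum_nonneg)
  have "sqrt (pvar f m) \<le> 2 * B" using pv B0 by (intro real_le_lsqrt) auto
  moreover have "\<bar>sgn (smean f m)\<bar> \<le> 1" by (simp add: abs_sgn_eq)
  ultimately have "\<bar>sgn (smean f m)\<bar> * sqrt (pvar f m) \<le> 1 * (2 * B)"
    using pvar0 by (intro mult_mono) auto
  then have "\<gamma> * (\<bar>sgn (smean f m)\<bar> * sqrt (pvar f m)) \<le> \<gamma> * (2 * B)"
    using g mult_left_mono by fastforce
  moreover have "\<bar>psi \<gamma> f m\<bar> = \<gamma> * (\<bar>sgn (smean f m)\<bar> * sqrt (pvar f m))"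
    using g pvar0 by (simp add: psi_def abs_mult)
  ultimately show ?thesis by simp
qed

lemma sol_cont:
  assumes "vp_sol Kp Kv l1 l2 \<gamma>p \<gamma>v a b N \<chi>s" "i \<le> N"
  shows "continuous_on {0..} (\<chi>s i)"
  using assms unfolding vp_sol_def
  by (intro continuous_on_vector_derivative) auto

lemma sol_bdd:
  assumes "vp_sol Kp Kv l1 l2 \<gamma>p \<gamma>v a b N \<chi>s" "j \<le> N"
  shows "bdd_above ((\<lambda>\<tau>. norm (\<chi>s j \<tau>)) ` {0..t})"
proof -
  have "continuous_on {0..t} (\<lambda>\<tau>. norm (\<chi>s j \<tau>))"
    using sol_cont[OF assms] by (intro continuous_intros) (auto intro: continuous_on_subset)
  then have "compact ((\<lambda>\<tau>. norm (\<chi>s j \<tau>)) ` {0..t})"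
    by (intro compact_continuous_image) auto
  then show ?thesis by (intro bounded_imp_bdd_above compact_imp_bounded)
qed

lemma pred_sup_ge:
  assumes "vp_sol Kp Kv l1 l2 \<gamma>p \<gamma>v a b N \<chi>s" "j < i" "i \<le> N" "0 \<le> \<tau>" "\<tau> \<le> t"
  shows "norm (\<chi>s j \<tau>) \<le> pred_sup \<chi>s i t"
proof -
  have "norm (\<chi>s j \<tau>) \<le> Sup ((\<lambda>\<tau>. norm (\<chi>s j \<tau>)) ` {0..t})"
    using assms by (intro cSup_upper sol_bdd[OF assms(1)]) auto
  also have "\<dots> \<le> Max ((\<lambda>j. Sup ((\<lambda>\<tau>. norm (\<chi>s j \<tau>)) ` {0..t})) ` {..<i})"
    using assms by (intro Max_ge) auto
  finally show ?thesis using assms by (simp add: pred_sup_def)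
qed

lemma pred_sup_le:
  assumes "t \<ge> 0" "C \<ge> 0" "\<And>j \<tau>. j < i \<Longrightarrow> 0 \<le> \<tau> \<Longrightarrow> \<tau> \<le> t \<Longrightarrow> norm (\<chi>s j \<tau>) \<le> C"
  shows "pred_sup \<chi>s i t \<le> C"
proof (cases "i = 0")
  case True then show ?thesis using assms by (simp add: pred_sup_def)
next
  case False
  have "Sup ((\<lambda>\<tau>. norm (\<chi>s j \<tau>)) ` {0..t}) \<le> C" if "j < i" for j
    using assms that by (intro cSup_least) auto
  then show ?thesis using False unfolding pred_sup_def by (simp only: if_False) (subst Max_le_iff; auto)
qed

lemma pred_sup_nonneg:
  assumes "vp_sol Kp Kv l1 l2 \<gamma>p \<gamma>v a b N \<chi>s" "i \<le> N" "t \<ge> 0"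
  shows "pred_sup \<chi>s i t \<ge> 0"
proof (cases "i = 0")
  case True then show ?thesis by (simp add: pred_sup_def)
next
  case False
  then have "norm (\<chi>s 0 0) \<le> pred_sup \<chi>s i t" using assms by (intro pred_sup_ge[OF assms(1)]) auto
  then show ?thesis by (meson norm_ge_zero order_trans)
qed

lemma gin_bound:
  assumes sol: "vp_sol Kp Kv l1 l2 \<gamma>p \<gamma>v a b N \<chi>s" and i: "i \<le> N"
    and "0 \<le> \<tau>" "\<tau> \<le> t" and ab: "a \<ge> 0" "b \<ge> 0" "\<gamma>p \<ge> 0" "\<gamma>v \<ge> 0"
  shows "\<bar>gin a b \<gamma>p \<gamma>v \<chi>s i \<tau>\<bar> \<le> 2 * (a * \<gamma>p + b * \<gamma>v) * pred_sup \<chi>s i t"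
proof (cases "i = 0")
  case True
  then show ?thesis by (simp add: gin_def pred_sup_def)
next
  case False
  let ?B = "pred_sup \<chi>s i t"
  have nb: "norm (\<chi>s j \<tau>) \<le> ?B" if "j \<le> i - 1" for j
    using pred_sup_ge[OF sol, of j i \<tau> t] that False i assms by auto
  have p1: "\<bar>psi \<gamma>p (\<lambda>j. x1 (\<chi>s j \<tau>)) (i - 1)\<bar> \<le> \<gamma>p * (2 * ?B)"
    using ab nb by (intro psi_bound) (auto simp: x1_def intro: order_trans[OF component_le_norm_cart])
  have p2: "\<bar>psi \<gamma>v (\<lambda>j. x2 (\<chi>s j \<tau>)) (i - 1)\<bar> \<le> \<gamma>v * (2 * ?B)"
    using ab nb by (intro psi_bound) (auto simp: x2_def intro: order_trans[OF component_le_norm_cart])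
  have "\<bar>gin a b \<gamma>p \<gamma>v \<chi>s i \<tau>\<bar> \<le> a * \<bar>psi \<gamma>p (\<lambda>j. x1 (\<chi>s j \<tau>)) (i - 1)\<bar> + b * \<bar>psi \<gamma>v (\<lambda>j. x2 (\<chi>s j \<tau>)) (i - 1)\<bar>"
    using False ab by (simp add: gin_def abs_mult order_trans[OF abs_triangle_ineq])
  also have "\<dots> \<le> a * (\<gamma>p * (2 * ?B)) + b * (\<gamma>v * (2 * ?B))"
    using p1 p2 ab by (intro add_mono mult_left_mono) auto
  finally show ?thesis by (simp add: algebra_simps)
qed

lemma classKL_exp:
  assumes "M > 0" "c > 0"
  shows "classKL (\<lambda>r t. M * r * exp (- c * t))"
  unfolding classKL_def classK_def
proof (intro conjI allI impI)
  fix t :: real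
  show "continuous_on {0..} (\<lambda>r. M * r * exp (- c * t))" by (intro continuous_intros)
  show "strict_mono_on {0..} (\<lambda>r. M * r * exp (- c * t))"
    using assms by (auto simp: strict_mono_on_def)
  show "M * 0 * exp (- c * t) = 0" by simp
next
  fix r :: real assume r: "r \<ge> 0"
  show "antimono_on {0..} (\<lambda>t. M * r * exp (- c * t))"
    using assms r by (auto simp: monotone_on_def intro!: mult_left_mono)
  show "((\<lambda>t. M * r * exp (- c * t)) \<longlongrightarrow> 0) at_top"
    using assms by real_asymp
qed

lemma KL_mono:
  assumes "classKL \<beta>" "0 \<le> r" "r \<le> r'" "0 \<le> t"
  shows "\<beta> r t \<le> \<beta> r' t"
proof -
  have "strict_mono_on {0..} (\<lambda>r. \<beta> r t)" using assms unfolding classKL_def classK_def by blast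
  then show ?thesis by (rule strict_mono_on_leD) (use assms in auto)
qed

lemma KL_anti:
  assumes "classKL \<beta>" "0 \<le> r" "0 \<le> s" "s \<le> t"
  shows "\<beta> r t \<le> \<beta> r s"
proof -
  have "antimono_on {0..} (\<beta> r)" using assms unfolding classKL_def by blast
  then show ?thesis by (rule monotone_onD) (use assms in auto)
qed

lemma KL_nonneg:
  assumes "classKL \<beta>" "0 \<le> r" "0 \<le> t"
  shows "0 \<le> \<beta> r t"
proof -
  have "\<beta> 0 t = 0" using assms unfolding classKL_def classK_def by blast
  then show ?thesis using KL_mono[OF assms(1) order_refl assms(2,3)] by simp
qed

lemma sol_shift:
  assumes sol: "vp_sol Kp Kv l1 l2 \<gamma>p \<gamma>v a b N \<chi>s" and T: "T \<ge> 0"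
  shows "vp_sol Kp Kv l1 l2 \<gamma>p \<gamma>v a b N (\<lambda>j t. \<chi>s j (t + T))"
  unfolding vp_sol_def
proof (intro allI impI)
  fix i :: nat and t :: real
  assume i: "i \<le> N" and t: "0 \<le> t"
  have g: "gin a b \<gamma>p \<gamma>v (\<lambda>j t. \<chi>s j (t + T)) i t = gin a b \<gamma>p \<gamma>v \<chi>s i (t + T)"
    by (simp add: gin_def)
  have d: "(\<chi>s i has_vector_derivative vp_field Kp Kv l1 l2 (\<chi>s i (t+T)) (gin a b \<gamma>p \<gamma>v \<chi>s i (t+T)))
      (at (t+T) within {0..})"
    using sol[unfolded vp_sol_def, rule_format, OF i, of "t+T"] t T by simp
  have d2: "(\<chi>s i has_vector_derivative vp_field Kp Kv l1 l2 (\<chi>s i (t+T)) (gin a b \<gamma>p \<gamma>v \<chi>s i (t+T)))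
      (at ((\<lambda>t. t + T) t) within (\<lambda>t. t + T) ` {0..})"
  proof -
    have "(\<lambda>t. t + T) ` {0..} \<subseteq> {0..}" using T by auto
    from has_vector_derivative_within_subset[OF d this] show ?thesis by simp
  qed
  have "((\<lambda>t. t + T) has_vector_derivative 1) (at t within {0..})"
    by (rule derivative_eq_intros refl)+ simp
  from vector_diff_chain_within[OF this d2]
  show "((\<lambda>t. \<chi>s i (t + T)) has_vector_derivative
        vp_field Kp Kv l1 l2 (\<chi>s i (t + T)) (gin a b \<gamma>p \<gamma>v (\<lambda>j t. \<chi>s j (t + T)) i t)) (at t within {0..})"
    by (simp add: g o_def)
qed

lemma uniform_bound:
  assumes KL: "classKL \<beta>" and g: "0 < g" "g < 1"
    and B: "vp_gain_bound Kp Kv l1 l2 \<gamma>p \<gamma>v a b \<beta> g"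
    and sol: "vp_sol Kp Kv l1 l2 \<gamma>p \<gamma>v a b N \<chi>s"
    and R: "\<And>i. i \<le> N \<Longrightarrow> norm (\<chi>s i 0) \<le> R"
  shows "\<And>i t. i \<le> N \<Longrightarrow> 0 \<le> t \<Longrightarrow> norm (\<chi>s i t) \<le> \<beta> R 0 / (1 - g)"
proof -
  have R0: "R \<ge> 0" using R[of 0] by (meson norm_ge_zero order_trans le0)
  define C where "C = \<beta> R 0 / (1 - g)"
  have C0: "C \<ge> 0" using KL_nonneg[OF KL R0, of 0] g by (simp add: C_def)
  have eqC: "\<beta> R 0 + g * C = C" using g by (simp add: C_def field_simps)
  fix i t
  show "i \<le> N \<Longrightarrow> 0 \<le> t \<Longrightarrow> norm (\<chi>s i t) \<le> \<beta> R 0 / (1 - g)"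
  proof (induction i arbitrary: t rule: less_induct)
    case (less i)
    have ps: "pred_sup \<chi>s i t \<le> C"
      using less by (intro pred_sup_le C0) (auto simp: C_def)
    have "norm (\<chi>s i t) \<le> \<beta> (norm (\<chi>s i 0)) t + g * pred_sup \<chi>s i t"
      using B sol less.prems unfolding vp_gain_bound_def by blast
    also have "\<dots> \<le> \<beta> R 0 + g * C"
    proof (intro add_mono mult_left_mono)
      have "\<beta> (norm (\<chi>s i 0)) t \<le> \<beta> R t" using KL_mono[OF KL] R less.prems by auto
      also have "\<dots> \<le> \<beta> R 0" using KL_anti[OF KL R0] less.prems by auto
      finally show "\<beta> (norm (\<chi>s i 0)) t \<le> \<beta> R 0" .
    qed (use ps g in auto)
    finally show ?case using eqC by (simp add: C_def)
  qed
qed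

lemma part4:
  assumes KL: "classKL \<beta>" and g: "0 < g" "g < 1"
    and B: "vp_gain_bound Kp Kv l1 l2 \<gamma>p \<gamma>v a b \<beta> g"
  shows "asym_string_stable Kp Kv l1 l2 \<gamma>p \<gamma>v a b"
  unfolding asym_string_stable_def
proof
  show "string_stable Kp Kv l1 l2 \<gamma>p \<gamma>v a b"
    unfolding string_stable_def
  proof (intro allI impI)
    fix \<epsilon> :: real assume eps: "\<epsilon> > 0"
    have "continuous_on {0..} (\<lambda>r. \<beta> r 0)" using KL unfolding classKL_def classK_def by blast
    moreover have b00: "\<beta> 0 0 = 0" using KL unfolding classKL_def classK_def by blast
    moreover have "\<epsilon> * (1 - g) > 0" using eps g by simp
    ultimately obtain d where d: "d > 0" "\<And>r. r \<in> {0..} \<Longrightarrow> dist r 0 < d \<Longrightarrow> dist (\<beta> r 0) (\<beta> 0 0) < \<epsilon> * (1 - g)"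
      unfolding continuous_on_iff by (metis atLeast_iff order_refl)
    have bd: "\<beta> (d/2) 0 < \<epsilon> * (1 - g)" using d(2)[of "d/2"] d(1) b00 by (simp add: dist_real_def)
    show "\<exists>\<delta>>0. \<forall>N \<chi>s. vp_sol Kp Kv l1 l2 \<gamma>p \<gamma>v a b N \<chi>s \<longrightarrow> (\<forall>i\<le>N. norm (\<chi>s i 0) < \<delta>) \<longrightarrow>
          (\<forall>t\<ge>0. \<forall>i\<le>N. norm (\<chi>s i t) < \<epsilon>)"
    proof (intro exI[of _ "d/2"] conjI allI impI)
      show "d/2 > 0" using d by simp
      fix N :: nat and \<chi>s :: "nat \<Rightarrow> real \<Rightarrow> real^4" and t :: real and i :: nat
      assume sol: "vp_sol Kp Kv l1 l2 \<gamma>p \<gamma>v a b N \<chi>s" and small: "\<forall>i\<le>N. norm (\<chi>s i 0) < d/2"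
        and t: "0 \<le> t" and i: "i \<le> N"
      have "norm (\<chi>s i t) \<le> \<beta> (d/2) 0 / (1 - g)"
        using uniform_bound[OF KL g B sol, of "d/2"] small t i less_imp_le by blast
      also have "\<dots> < \<epsilon>" using bd g by (simp add: divide_less_eq)
      finally show "norm (\<chi>s i t) < \<epsilon>" .
    qed
  qed
next
  show "\<forall>N \<chi>s. vp_sol Kp Kv l1 l2 \<gamma>p \<gamma>v a b N \<chi>s \<longrightarrow> (\<forall>i\<le>N. ((\<lambda>t. norm (\<chi>s i t)) \<longlongrightarrow> 0) at_top)"
  proof (intro allI impI)
    fix N \<chi>s i assume sol: "vp_sol Kp Kv l1 l2 \<gamma>p \<gamma>v a b N \<chi>s" and iN: "i \<le> N"
    define R where "R = (\<Sum>i\<le>N. norm (\<chi>s i 0))"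
    have R: "norm (\<chi>s i 0) \<le> R" if "i \<le> N" for i
      unfolding R_def using that by (intro member_le_sum) auto
    have R0: "R \<ge> 0" unfolding R_def by (simp add: sum_nonneg)
    define C where "C = \<beta> R 0 / (1 - g)"
    have bnd: "norm (\<chi>s i t) \<le> C" if "i \<le> N" "0 \<le> t" for i t
      using uniform_bound[OF KL g B sol R] that by (simp add: C_def)
    have C0: "C \<ge> 0" using bnd[of 0 0] norm_ge_zero order_trans by blast
    have lim: "((\<lambda>t. \<beta> C t) \<longlongrightarrow> 0) at_top" using KL C0 unfolding classKL_def by blast
    from iN show "((\<lambda>t. norm (\<chi>s i t)) \<longlongrightarrow> 0) at_top"
      proof (induction i rule: less_induct)
        case (less i)
        show ?case unfolding tendsto_iff
        proof (intro allI impI)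
          fix \<epsilon> :: real assume eps: "\<epsilon> > 0"
          define \<eta> where "\<eta> = \<epsilon> / 2"
          have eta: "\<eta> > 0" using eps by (simp add: \<eta>_def)
          have "\<forall>j\<in>{..<i}. eventually (\<lambda>t. norm (\<chi>s j t) < \<eta>) at_top"
          proof
            fix j assume "j \<in> {..<i}"
            then have "((\<lambda>t. norm (\<chi>s j t)) \<longlongrightarrow> 0) at_top" using less by auto
            then show "eventually (\<lambda>t. norm (\<chi>s j t) < \<eta>) at_top"
              using eta unfolding tendsto_iff by (force simp: dist_real_def)
          qed
          then have "eventually (\<lambda>t. \<forall>j\<in>{..<i}. norm (\<chi>s j t) < \<eta>) at_top"
            by (intro eventually_ball_finite) auto
          then obtain T0 where T0: "\<And>t j. t \<ge> T0 \<Longrightarrow> j < i \<Longrightarrow> norm (\<chi>s j t) < \<eta>"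
            unfolding eventually_at_top_linorder by auto
          have "eventually (\<lambda>t. dist (\<beta> C t) 0 < \<eta>) at_top" using lim eta unfolding tendsto_iff by blast
          then obtain T1 where T1: "\<And>t. t \<ge> T1 \<Longrightarrow> \<bar>\<beta> C t\<bar> < \<eta>"
            unfolding eventually_at_top_linorder dist_real_def by auto
          define T where "T = max T0 0"
          have T: "T \<ge> 0" "T \<ge> T0" by (auto simp: T_def)
          have "\<forall>t\<ge>T + max T1 0. dist (norm (\<chi>s i t)) 0 < \<epsilon>"
          proof (intro allI impI)
            fix t assume t: "T + max T1 0 \<le> t"
            define s where "s = t - T"
            have s: "s \<ge> 0" "s \<ge> T1" "t = s + T" using t by (auto simp: s_def)
            have sol': "vp_sol Kp Kv l1 l2 \<gamma>p \<gamma>v a b N (\<lambda>j t. \<chi>s j (t + T))"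
              by (rule sol_shift[OF sol T(1)])
            have "norm (\<chi>s i (s + T)) \<le> \<beta> (norm (\<chi>s i (0 + T))) s + g * pred_sup (\<lambda>j t. \<chi>s j (t + T)) i s"
              using B sol' less.prems s unfolding vp_gain_bound_def by blast
            also have "\<dots> < \<eta> + g * \<eta>"
            proof (rule add_less_le_mono)
              have "\<beta> (norm (\<chi>s i (0 + T))) s \<le> \<beta> C s"
                using KL_mono[OF KL _ _ s(1)] bnd less.prems T by auto
              then show "\<beta> (norm (\<chi>s i (0 + T))) s < \<eta>" using T1[OF s(2)] by linarith
              have "pred_sup (\<lambda>j t. \<chi>s j (t + T)) i s \<le> \<eta>"
                using s eta T0 T by (intro pred_sup_le) (auto intro: less_imp_le)
              then show "g * pred_sup (\<lambda>j t. \<chi>s j (t + T)) i s \<le> g * \<eta>"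
                using g by (intro mult_left_mono) auto
            qed
            also have "\<dots> \<le> \<epsilon>" using g eta by (simp add: \<eta>_def field_simps)
            finally show "dist (norm (\<chi>s i t)) 0 < \<epsilon>" using s by simp
          qed
          then show "eventually (\<lambda>t. dist (norm (\<chi>s i t)) 0 < \<epsilon>) at_top"
            unfolding eventually_at_top_linorder by blast
        qed
      qed
  qed
qed

lemma gain:
  assumes ab: "a \<ge> 0" "b \<ge> 0" "\<gamma>p \<ge> 0" "\<gamma>v \<ge> 0"
    and core: "\<forall>x u t0 S. (\<forall>t\<ge>0. (x has_vector_derivative vp_field Kp Kv l1 l2 (x t) (u t)) (at t within {0..}))
       \<longrightarrow> t0 \<ge> 0 \<longrightarrow> (\<forall>\<tau>. 0 \<le> \<tau> \<longrightarrow> \<tau> \<le> t0 \<longrightarrow> \<bar>u \<tau>\<bar> \<le> S)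
       \<longrightarrow> norm (x t0) \<le> M * norm (x 0) * exp (- c * t0) + L * S"
    and L: "L \<ge> 0" and g: "g \<ge> L * (2 * (a * \<gamma>p + b * \<gamma>v))"
  shows "vp_gain_bound Kp Kv l1 l2 \<gamma>p \<gamma>v a b (\<lambda>r t. M * r * exp (- c * t)) g"
  unfolding vp_gain_bound_def
proof (intro allI impI)
  fix N :: nat and \<chi>s :: "nat \<Rightarrow> real \<Rightarrow> real^4" and i :: nat and t :: real
  assume sol: "vp_sol Kp Kv l1 l2 \<gamma>p \<gamma>v a b N \<chi>s" and i: "i \<le> N" and t: "0 \<le> t"
  let ?S = "2 * (a * \<gamma>p + b * \<gamma>v) * pred_sup \<chi>s i t"
  have der: "\<forall>t\<ge>0. (\<chi>s i has_vector_derivative vp_field Kp Kv l1 l2 (\<chi>s i t) (gin a b \<gamma>p \<gamma>v \<chi>s i t)) (at t within {0..})"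
    using sol i unfolding vp_sol_def by blast
  have ub: "\<forall>\<tau>. 0 \<le> \<tau> \<longrightarrow> \<tau> \<le> t \<longrightarrow> \<bar>gin a b \<gamma>p \<gamma>v \<chi>s i \<tau>\<bar> \<le> ?S"
    using gin_bound[OF sol i _ _ ab] by blast
  have "norm (\<chi>s i t) \<le> M * norm (\<chi>s i 0) * exp (- c * t) + L * ?S"
    by (rule core[rule_format]) (use der ub t in auto)
  also have "L * ?S \<le> g * pred_sup \<chi>s i t"
  proof -
    have ps: "pred_sup \<chi>s i t \<ge> 0" by (rule pred_sup_nonneg[OF sol i t])
    have "L * ?S = (L * (2 * (a * \<gamma>p + b * \<gamma>v))) * pred_sup \<chi>s i t" by (simp add: algebra_simps)
    also have "\<dots> \<le> g * pred_sup \<chi>s i t" using g ps by (intro mult_right_mono) auto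
    finally show ?thesis .
  qed
  finally show "norm (\<chi>s i t) \<le> M * norm (\<chi>s i 0) * exp (- c * t) + g * pred_sup \<chi>s i t" by simp
qed

theorem theorem3:
  fixes Kp Kv l1 l2 \<gamma>p \<gamma>v a b :: real
  assumes "Kp > 0" "Kv > 0" "l1 > 0" "l2 > 0" "\<gamma>p > 0" "\<gamma>v > 0"
    and "a \<ge> 0" "b \<ge> 0"
  shows "iso_GES Kp Kv l1 l2 \<and>
    (\<exists>\<beta> g. classKL \<beta> \<and> g > 0 \<and> vp_gain_bound Kp Kv l1 l2 \<gamma>p \<gamma>v a b \<beta> g) \<and>
    (\<exists>a' b'. a' \<ge> 0 \<and> b' \<ge> 0 \<and> (a' \<noteq> 0 \<or> b' \<noteq> 0) \<and>
           (\<exists>\<beta> g. classKL \<beta> \<and> 0 < g \<and> g < 1 \<and> vp_gain_bound Kp Kv l1 l2 \<gamma>p \<gamma>v a' b' \<beta> g)) \<and>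
    (\<forall>a' b'. a' \<ge> 0 \<longrightarrow> b' \<ge> 0 \<longrightarrow> (a' \<noteq> 0 \<or> b' \<noteq> 0) \<longrightarrow>
           (\<exists>\<beta> g. classKL \<beta> \<and> 0 < g \<and> g < 1 \<and> vp_gain_bound Kp Kv l1 l2 \<gamma>p \<gamma>v a' b' \<beta> g) \<longrightarrow>
           asym_string_stable Kp Kv l1 l2 \<gamma>p \<gamma>v a' b')"
proof -
  obtain M c L where M: "M > 0" and c: "c > 0" and L: "L > 0" and core:
    "\<forall>x u t0 S. (\<forall>t\<ge>0. (x has_vector_derivative vp_field Kp Kv l1 l2 (x t) (u t)) (at t within {0..}))
       \<longrightarrow> t0 \<ge> 0 \<longrightarrow> (\<forall>\<tau>. 0 \<le> \<tau> \<longrightarrow> \<tau> \<le> t0 \<longrightarrow> \<bar>u \<tau>\<bar> \<le> S)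
       \<longrightarrow> norm (x t0) \<le> M * norm (x 0) * exp (- c * t0) + L * S"
    using core_ex[OF assms(1-4)] by blast
  have KL: "classKL (\<lambda>r t. M * r * exp (- c * t))" by (rule classKL_exp[OF M c])
  have iso: "norm (x t) \<le> M * norm (x 0) * exp (- c * t)"
    if x: "iso_sol Kp Kv l1 l2 x" and t: "0 \<le> t" for x t
  proof -
    have "norm (x t) \<le> M * norm (x 0) * exp (- c * t) + L * 0"
      by (rule core[rule_format]) (use x t in \<open>auto simp: iso_sol_def\<close>)
    then show ?thesis by simp
  qed
  have P1: "iso_GES Kp Kv l1 l2"
    unfolding iso_GES_def using M c iso by blast
  have P2: "\<exists>\<beta> g. classKL \<beta> \<and> g > 0 \<and> vp_gain_bound Kp Kv l1 l2 \<gamma>p \<gamma>v a b \<beta> g"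
  proof (intro exI conjI)
    show "classKL (\<lambda>r t. M * r * exp (- c * t))" by (rule KL)
    have "L * (2 * (a * \<gamma>p + b * \<gamma>v)) \<ge> 0" using L assms by simp
    then show "L * (2 * (a * \<gamma>p + b * \<gamma>v)) + 1 > 0" by simp
    show "vp_gain_bound Kp Kv l1 l2 \<gamma>p \<gamma>v a b (\<lambda>r t. M * r * exp (- c * t)) (L * (2 * (a * \<gamma>p + b * \<gamma>v)) + 1)"
      using assms L by (intro gain[OF _ _ _ _ core]) auto
  qed
  have P3: "\<exists>a' b'. a' \<ge> 0 \<and> b' \<ge> 0 \<and> (a' \<noteq> 0 \<or> b' \<noteq> 0) \<and>
           (\<exists>\<beta> g. classKL \<beta> \<and> 0 < g \<and> g < 1 \<and> vp_gain_bound Kp Kv l1 l2 \<gamma>p \<gamma>v a' b' \<beta> g)"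
  proof (intro exI conjI)
    define a' where "a' = 1 / (4 * L * \<gamma>p)"
    have a'pos: "a' > 0" using L assms by (simp add: a'_def)
    show "a' \<ge> 0" "(0::real) \<ge> 0" "a' \<noteq> 0 \<or> (0::real) \<noteq> 0" using a'pos by auto
    show "classKL (\<lambda>r t. M * r * exp (- c * t))" by (rule KL)
    show "0 < (1/2::real)" "(1/2::real) < 1" by auto
    have "L * (2 * (a' * \<gamma>p + 0 * \<gamma>v)) = 1/2" using L assms by (simp add: a'_def field_simps)
    then show "vp_gain_bound Kp Kv l1 l2 \<gamma>p \<gamma>v a' 0 (\<lambda>r t. M * r * exp (- c * t)) (1/2)"
      using assms L a'pos by (intro gain[OF _ _ _ _ core]) auto
  qed
  have P4: "\<forall>a' b'. a' \<ge> 0 \<longrightarrow> b' \<ge> 0 \<longrightarrow> (a' \<noteq> 0 \<or> b' \<noteq> 0) \<longrightarrow>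
           (\<exists>\<beta> g. classKL \<beta> \<and> 0 < g \<and> g < 1 \<and> vp_gain_bound Kp Kv l1 l2 \<gamma>p \<gamma>v a' b' \<beta> g) \<longrightarrow>
           asym_string_stable Kp Kv l1 l2 \<gamma>p \<gamma>v a' b'"
    using part4 by blast
  show ?thesis using P1 P2 P3 P4 by blast
qed

end
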